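(* Let $W=\{0,\tfrac16,\tfrac13,\tfrac12\}\subset S^1$. Then $P(W)$ holds.
   Context: Identify $S^1$ with $\mathbb{R}/\mathbb{Z}$. The group $O(2)$ acts on $S^1$ by translations $x\mapsto x+a$ and reflections $x\mapsto -x+2a$. A coloring $c:S^1\to\{R,B\}$ is distinguishing if no non-identity $\gamma\in O(2)$ satisfies $c\circ\gamma=c$. For $W\subset S^1$ with trivial pointwise stabilizer in $O(2)$, $P(W)$ holds if every precoloring $c:S^1\setminus W\to\{R,B\}$ extends to a distinguishing coloring of $S^1$. *)

theory Defs
  imports Complex_Main
begin

text \<open>S^1 = R/Z is modelled by reals modulo 1: a function on S^1 is a
  1-periodic function on the reals, and a subset of S^1 is given by a set of
  representatives W (a real x lies in W as a point of S^1 iff x - w is an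
  integer for some w in W).\<close>

datatype color = R | B

definition periodic1 :: "(real \<Rightarrow> 'b) \<Rightarrow> bool" where
  "periodic1 f \<longleftrightarrow> (\<forall>x. f (x + 1) = f x)"

definition in_circle_set :: "real \<Rightarrow> real set \<Rightarrow> bool" where
  "in_circle_set x W \<longleftrightarrow> (\<exists>w\<in>W. x - w \<in> \<int>)"

text \<open>A coloring of S^1 is distinguishing if no non-identity element of O(2)
  preserves it. Translations x + a are the identity iff a is an integer;
  reflections x \<mapsto> -x + 2a are never the identity on S^1.\<close>

definition distinguishing :: "(real \<Rightarrow> color) \<Rightarrow> bool" where
  "distinguishing c \<longleftrightarrow>
     (\<forall>a. (\<forall>x. c (x + a) = c x) \<longrightarrow> a \<in> \<int>) \<and>
     (\<forall>a. \<not> (\<forall>x. c (- x + 2 * a) = c x))"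

text \<open>P(W): every precoloring of S^1 minus W extends to a distinguishing
  coloring. A precoloring is represented by any periodic coloring p whose
  values on W are ignored.\<close>

definition P :: "real set \<Rightarrow> bool" where
  "P W \<longleftrightarrow> (\<forall>p. periodic1 p \<longrightarrow>
     (\<exists>c. periodic1 c \<and> (\<forall>x. \<not> in_circle_set x W \<longrightarrow> c x = p x) \<and> distinguishing c))"

end

theory Submission
  imports Defs
begin


fun neg :: "color \<Rightarrow> color" where "neg R = B" | "neg B = R"
lemma neg_neq[simp]: "neg x \<noteq> x" by (cases x) auto
lemma neg_neq2[simp]: "x \<noteq> neg x" by (cases x) auto
lemma neg_neg[simp]: "neg (neg x) = x" by (cases x) auto
lemma neg_inj[simp]: "neg x = neg y \<longleftrightarrow> x = y" by (cases x; cases y) auto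
lemma neg_eq_iff: "x \<noteq> y \<Longrightarrow> y = neg x" for x y :: color by (cases x; cases y) auto

definition flip :: "(real \<Rightarrow> color) \<Rightarrow> real \<Rightarrow> real \<Rightarrow> color" where
  "flip c w x = (if x - w \<in> \<int> then neg (c x) else c x)"

lemma flip_in: "x - w \<in> \<int> \<Longrightarrow> flip c w x = neg (c x)" by (simp add: flip_def)
lemma flip_out: "x - w \<notin> \<int> \<Longrightarrow> flip c w x = c x" by (simp add: flip_def)
lemma flip_self: "flip c w w = neg (c w)" by (simp add: flip_def)

lemma per_nat: assumes "periodic1 c" shows "c (x + real n) = c x"
proof (induction n arbitrary: x)
  case 0 then show ?case by simp
next
  case (Suc n)
  have "c (x + real (Suc n)) = c ((x + real n) + 1)" by (simp add: algebra_simps)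
  also have "\<dots> = c (x + real n)" using assms unfolding periodic1_def by blast
  also have "\<dots> = c x" by (rule Suc.IH)
  finally show ?case .
qed

lemma per_int: assumes "periodic1 c" shows "c (x + of_int n) = c x"
proof (cases "n \<ge> 0")
  case True
  then obtain m where "n = int m" by (metis nonneg_eq_int)
  then show ?thesis using per_nat[OF assms] by simp
next
  case False
  define m where "m = nat (-n)"
  have n: "n = - int m" using False by (simp add: m_def)
  have "c (x - real m + real m) = c (x - real m)" by (rule per_nat[OF assms])
  then show ?thesis using n by simp
qed

lemma per_cong: assumes "periodic1 c" "x - y \<in> \<int>" shows "c x = c y"
proof -
  obtain n where n: "x - y = of_int n" using assms(2) by (auto elim: Ints_cases)
  have "x = y + of_int n" using n by simp
  then show ?thesis using per_int[OF assms(1)] by simp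
qed

lemma Ints_add1_iff: "(t + 1 :: real) \<in> \<int> \<longleftrightarrow> t \<in> \<int>"
proof
  assume "t + 1 \<in> \<int>" then have "(t + 1) - 1 \<in> \<int>" by (intro Ints_diff) auto
  then show "t \<in> \<int>" by simp
qed (auto intro: Ints_add)

lemma flip_per: assumes "periodic1 c" shows "periodic1 (flip c w)"
  unfolding periodic1_def
proof
  fix x
  have e: "x + 1 - w = (x - w) + 1" by simp
  have "c (x + 1) = c x" using assms unfolding periodic1_def by blast
  then show "flip c w (x + 1) = flip c w x" unfolding flip_def e Ints_add1_iff by simp
qed

lemma flip_flip: "flip (flip c w) w = c"
  by (rule ext) (simp add: flip_def)

lemma nonint: assumes "0 < r" "r < 1" shows "(r::real) \<notin> \<int>"
proof
  assume "r \<in> \<int>"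
  then obtain n where n: "r = of_int n" by (auto elim: Ints_cases)
  have "0 < n" using assms(1) n by simp
  moreover have "n < 1" using assms(2) n by simp
  ultimately show False by simp
qed

lemma minus_Ints_iff: "(- t :: real) \<in> \<int> \<longleftrightarrow> t \<in> \<int>"
  using Ints_minus by fastforce

lemma ni1: "(1/6::real) \<notin> \<int>" by (rule nonint) auto
lemma ni2: "(1/3::real) \<notin> \<int>" by (rule nonint) auto
lemma ni3: "(1/2::real) \<notin> \<int>" by (rule nonint) auto
lemma ni4: "(2/3::real) \<notin> \<int>" by (rule nonint) auto
lemma ni5: "(5/6::real) \<notin> \<int>" by (rule nonint) auto
lemmas nis = ni1 ni2 ni3 ni4 ni5

lemma Zc1: "A \<in> \<int> \<Longrightarrow> C = of_int i * A + of_int k \<Longrightarrow> (C::real) \<in> \<int>"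
  by (simp add: Ints_add Ints_mult)
lemma Zc2: "A \<in> \<int> \<Longrightarrow> B' \<in> \<int> \<Longrightarrow> C = of_int i * A + of_int j * B' + of_int k \<Longrightarrow> (C::real) \<in> \<int>"
  by (simp add: Ints_add Ints_mult)
lemma Zc3: "A \<in> \<int> \<Longrightarrow> B' \<in> \<int> \<Longrightarrow> D \<in> \<int> \<Longrightarrow> C = of_int i * A + of_int j * B' + of_int l * D + of_int k \<Longrightarrow> (C::real) \<in> \<int>"
  by (simp add: Ints_add Ints_mult)
lemma Zc4: "A \<in> \<int> \<Longrightarrow> B' \<in> \<int> \<Longrightarrow> D \<in> \<int> \<Longrightarrow> E \<in> \<int> \<Longrightarrow> C = of_int i * A + of_int j * B' + of_int l * D + of_int m * E + of_int k \<Longrightarrow> (C::real) \<in> \<int>"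
  by (simp add: Ints_add Ints_mult)

lemma test1: assumes "a - 1/3 \<in> \<int>" shows "6 * (a::real) \<in> \<int>"
  by (rule Zc1[OF assms, where i=6 and k=2]) (simp add: algebra_simps)

lemma test2: assumes "(x::real) - 1/6 \<in> \<int>" "y - 1/2 \<in> \<int>" shows "x - y + 1/3 \<in> \<int>"
  by (rule Zc2[OF assms, where i=1 and j="-1" and k=0]) (simp add: algebra_simps)

lemma test3: "(1/6 - 1/2 - 2/3 :: real) \<in> \<int>" by simp
lemma test4: "(1/3 - 1/6 :: real) \<notin> \<int>" by (simp add: nis)



lemma not_dist:
  assumes "\<not> distinguishing c"
  shows "(\<exists>d. d \<notin> \<int> \<and> (\<forall>x. c (x + d) = c x)) \<or> (\<exists>b. \<forall>x. c (b - x) = c x)"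
proof -
  from assms consider "\<exists>a. (\<forall>x. c (x + a) = c x) \<and> a \<notin> \<int>" | "\<exists>a. \<forall>x. c (- x + 2 * a) = c x"
    unfolding distinguishing_def by blast
  then show ?thesis
  proof cases
    case 1 then show ?thesis by blast
  next
    case 2
    then obtain a where a: "\<forall>x. c (- x + 2 * a) = c x" by blast
    have "\<forall>x. c (2 * a - x) = c x" using a by (simp add: algebra_simps)
    then show ?thesis by blast
  qed
qed

lemma step_flip:
  assumes "\<forall>z. flip c w (b - z) = flip c w z" "z - w \<notin> \<int>" "(b - z) - w \<notin> \<int>"
  shows "c (b - z) = c z"
proof -
  have "flip c w (b - z) = flip c w z" using assms(1) by blast
  then show ?thesis using assms(2,3) by (simp add: flip_out)
qed

lemma step_tr:
  assumes "\<forall>z. flip c w (z + d) = flip c w z" "z - w \<notin> \<int>" "(z + d) - w \<notin> \<int>"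
  shows "c (z + d) = c z"
proof -
  have "flip c w (z + d) = flip c w z" using assms(1) by blast
  then show ?thesis using assms(2,3) by (simp add: flip_out)
qed

lemma tr_at_w:
  assumes "\<forall>z. flip c w (z + d) = flip c w z" "d \<notin> \<int>"
  shows "c (w + d) = neg (c w)" "c (w - d) = neg (c w)"
proof -
  have "flip c w (w + d) = flip c w w" using assms(1) by blast
  then show "c (w + d) = neg (c w)" using assms(2) by (simp add: flip_out flip_self)
  have "flip c w (w - d + d) = flip c w (w - d)" using assms(1) by blast
  moreover have "w - d - w \<notin> \<int>" using assms(2) minus_Ints_iff by simp
  ultimately show "c (w - d) = neg (c w)" by (simp add: flip_out flip_self)
qed

lemma L_TT:
  assumes per: "periodic1 c" and ta: "\<forall>z. c (z + a) = c z" and na: "a \<notin> \<int>"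
    and td: "\<forall>z. flip c w (z + d) = flip c w z" and nd: "d \<notin> \<int>"
  shows False
proof -
  have e1: "c (w + d) = neg (c w)" using tr_at_w[OF td nd] by blast
  show False
  proof (cases "a + d \<in> \<int>")
    case True
    have "c (w + d) = c (w - a)" by (rule per_cong[OF per]) (use True in \<open>simp add: algebra_simps\<close>)
    also have "c (w - a) = c (w - a + a)" using ta[rule_format, of "w - a"] by simp
    finally show False using e1 by simp
  next
    case False
    have "c (w + a + d) = c (w + a)"
      by (rule step_tr[OF td]) (use na False in \<open>simp_all add: algebra_simps\<close>)
    moreover have "c (w + a) = c w" using ta by blast
    moreover have "c (w + d + a) = c (w + d)" using ta by blast
    ultimately have "c (w + d) = c w" by (simp add: algebra_simps)
    then show False using e1 by simp
  qed
qed

lemma L_RT: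
  assumes per: "periodic1 c" and rb: "\<forall>z. c (b - z) = c z"
    and td: "\<forall>z. flip c w (z + d) = flip c w z" and nd: "d \<notin> \<int>"
  shows "b - 2 * w \<in> \<int>"
proof (rule ccontr)
  assume nb: "b - 2 * w \<notin> \<int>"
  have e2: "c (w - d) = neg (c w)" using tr_at_w[OF td nd] by blast
  have e3: "c (b - w) = c w" using rb by blast
  show False
  proof (cases "(b - w + d) - w \<in> \<int>")
    case True
    have "c (b - w) = c (w - d)" by (rule per_cong[OF per]) (use True in \<open>simp add: algebra_simps\<close>)
    then show False using e2 e3 by simp
  next
    case False
    have "c (b - w + d) = c (b - w)"
      by (rule step_tr[OF td]) (use nb False in \<open>simp_all add: algebra_simps\<close>)
    moreover have "c (b - (b - w + d)) = c (b - w + d)" using rb by blast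
    ultimately have "c (w - d) = c w" using e3 by simp
    then show False using e2 by simp
  qed
qed

lemma L_fix:
  assumes fl: "\<forall>z. flip c w (b - z) = flip c w z" and hb: "b - 2 * w \<in> \<int>"
  shows "\<forall>z. c (b - z) = c z"
proof
  fix z
  have iff: "(b - z) - w \<in> \<int> \<longleftrightarrow> z - w \<in> \<int>"
  proof
    assume "(b - z) - w \<in> \<int>"
    then have "(b - 2*w) - ((b - z) - w) \<in> \<int>" by (rule Ints_diff[OF hb])
    then show "z - w \<in> \<int>" by (simp add: algebra_simps)
  next
    assume "z - w \<in> \<int>"
    then have "(b - 2*w) - (z - w) \<in> \<int>" by (rule Ints_diff[OF hb])
    then show "(b - z) - w \<in> \<int>" by (simp add: algebra_simps)
  qed
  have "flip c w (b - z) = flip c w z" using fl by blast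
  then show "c (b - z) = c z" using iff unfolding flip_def by (auto split: if_splits)
qed

lemma L_col:
  assumes fl: "\<forall>z. flip c w (b - z) = flip c w z" and nb: "b - 2 * w \<notin> \<int>"
  shows "c (b - w) = neg (c w)"
proof -
  have "flip c w (b - w) = flip c w w" using fl by blast
  moreover have "(b - w) - w \<notin> \<int>" using nb by (simp add: algebra_simps)
  ultimately show ?thesis by (simp add: flip_out flip_self)
qed

lemma L_same:
  assumes per: "periodic1 c" and rb: "\<forall>z. c (b - z) = c z"
    and fl: "\<forall>z. flip c w (b' - z) = flip c w z" and hbb: "b - b' \<in> \<int>"
  shows "b - 2 * w \<in> \<int>"
proof (rule ccontr)
  assume nb: "b - 2 * w \<notin> \<int>"
  have nb': "b' - 2 * w \<notin> \<int>"
  proof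
    assume "b' - 2 * w \<in> \<int>"
    then have "(b' - 2 * w) + (b - b') \<in> \<int>" using hbb by (intro Ints_add)
    then show False using nb by (simp add: algebra_simps)
  qed
  have "c (b' - w) = neg (c w)" by (rule L_col[OF fl nb'])
  moreover have "c (b' - w) = c (b - w)" by (rule per_cong[OF per], rule Zc1[OF hbb, where i="-1" and k=0]) (simp add: algebra_simps)
  moreover have "c (b - w) = c w" using rb by blast
  ultimately show False by simp
qed

lemma pathC:
  assumes per: "periodic1 c" and ra: "\<forall>z. c (a - z) = c z"
    and r2: "\<forall>z. flip c x (b2 - z) = flip c x z"
    and r3: "\<forall>z. flip c y (b3 - z) = flip c y z"
    and nxy: "x - y \<notin> \<int>" and n2: "b2 - 2 * x \<notin> \<int>"
  shows "b3 - x - y \<in> \<int> \<or> a - b3 \<in> \<int> \<or> b2 + b3 - a - 2 * x \<in> \<int> \<or> b2 + b3 - a - x - y \<in> \<int> \<or> a - b2 + x - y \<in> \<int>"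
proof (rule ccontr)
  assume "\<not> ?thesis"
  then have q1: "b3 - x - y \<notin> \<int>" and q2: "a - b3 \<notin> \<int>" and q3: "b2 + b3 - a - 2 * x \<notin> \<int>"
    and q4: "b2 + b3 - a - x - y \<notin> \<int>" and q5: "a - b2 + x - y \<notin> \<int>" by auto
  have s1: "c (b3 - x) = c x"
    by (rule step_flip[OF r3]) (use nxy q1 in \<open>simp_all add: algebra_simps\<close>)
  have s2: "c (a - (b3 - x)) = c (b3 - x)" using ra by blast
  have s3: "c (b2 - (a - (b3 - x))) = c (a - (b3 - x))"
    by (rule step_flip[OF r2]) (use q2 q3 in \<open>simp_all add: algebra_simps\<close>)
  have s4: "c (b3 - (b2 - (a - (b3 - x)))) = c (b2 - (a - (b3 - x)))"
    by (rule step_flip[OF r3]) (use q4 q5 in \<open>simp_all add: algebra_simps\<close>)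
  have s5: "c (a - (b3 - (b2 - (a - (b3 - x))))) = c (b3 - (b2 - (a - (b3 - x))))" using ra by blast
  have e: "a - (b3 - (b2 - (a - (b3 - x)))) = b2 - x" by (simp add: algebra_simps)
  have s6: "c (b2 - x) = neg (c x)" by (rule L_col[OF r2 n2])
  from s1 s2 s3 s4 s5 s6 e show False by simp
qed

lemma pathD:
  assumes per: "periodic1 c" and ra: "\<forall>z. c (a - z) = c z"
    and r2: "\<forall>z. flip c x (b2 - z) = flip c x z"
    and r3: "\<forall>z. flip c y (b3 - z) = flip c y z"
    and nxy: "x - y \<notin> \<int>" and n2: "b2 - 2 * x \<notin> \<int>"
  shows "a - x - y \<in> \<int> \<or> b3 - a + x - y \<in> \<int> \<or> b3 - a \<in> \<int> \<or> b2 - b3 + a - 2 * x \<in> \<int> \<or> b3 - b2 + x - y \<in> \<int> \<or> b2 - x - y \<in> \<int>"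
proof (rule ccontr)
  assume "\<not> ?thesis"
  then have q1: "a - x - y \<notin> \<int>" and q2: "b3 - a + x - y \<notin> \<int>" and q3: "b3 - a \<notin> \<int>"
    and q4: "b2 - b3 + a - 2 * x \<notin> \<int>" and q5: "b3 - b2 + x - y \<notin> \<int>" and q6: "b2 - x - y \<notin> \<int>" by auto
  have s1: "c (a - x) = c x" using ra by blast
  have s2: "c (b3 - (a - x)) = c (a - x)"
    by (rule step_flip[OF r3]) (use q1 q2 in \<open>simp_all add: algebra_simps\<close>)
  have s3: "c (b2 - (b3 - (a - x))) = c (b3 - (a - x))"
    by (rule step_flip[OF r2]) (use q3 q4 in \<open>simp_all add: algebra_simps\<close>)
  have s4: "c (a - (b2 - (b3 - (a - x)))) = c (b2 - (b3 - (a - x)))" using ra by blast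
  have s5: "c (b3 - (a - (b2 - (b3 - (a - x))))) = c (a - (b2 - (b3 - (a - x))))"
    by (rule step_flip[OF r3]) (use q5 q6 in \<open>simp_all add: algebra_simps\<close>)
  have e: "b3 - (a - (b2 - (b3 - (a - x)))) = b2 - x" by (simp add: algebra_simps)
  have s6: "c (b2 - x) = neg (c x)" by (rule L_col[OF r2 n2])
  from s1 s2 s3 s4 s5 s6 e show False by simp
qed



lemma refl_of:
  assumes per: "periodic1 c" and asym: "\<And>b. 6*b \<in> \<int> \<Longrightarrow> \<not>(\<forall>z. c (b - z) = c z)"
    and nd0: "\<not> distinguishing c" and nd00: "\<not> distinguishing (flip c 0)"
  shows "\<exists>a. (\<forall>z. c (a - z) = c z) \<and> 6*a \<notin> \<int>"
proof -
  from not_dist[OF nd0] show ?thesis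
  proof
    assume "\<exists>d. d \<notin> \<int> \<and> (\<forall>x. c (x + d) = c x)"
    then obtain d where nd: "d \<notin> \<int>" and td: "\<forall>x. c (x + d) = c x" by blast
    from not_dist[OF nd00] show ?thesis
    proof
      assume "\<exists>d. d \<notin> \<int> \<and> (\<forall>x. flip c 0 (x + d) = flip c 0 x)"
      then obtain d' where "d' \<notin> \<int>" "\<forall>x. flip c 0 (x + d') = flip c 0 x" by blast
      then show ?thesis using L_TT[OF per td nd] by blast
    next
      assume "\<exists>b. \<forall>x. flip c 0 (b - x) = flip c 0 x"
      then obtain b where rb: "\<forall>x. flip c 0 (b - x) = flip c 0 x" by blast
      have td': "\<forall>z. flip (flip c 0) 0 (z + d) = flip (flip c 0) 0 z" using td by (simp add: flip_flip)
      have "b - 2 * 0 \<in> \<int>" by (rule L_RT[OF flip_per[OF per] rb td' nd])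
      then have hb: "b \<in> \<int>" by simp
      have "\<forall>z. c (b - z) = c z" by (rule L_fix[OF rb]) (use hb in simp)
      moreover have "6 * b \<in> \<int>" using hb by (simp add: Ints_mult)
      ultimately show ?thesis using asym by blast
    qed
  next
    assume "\<exists>b. \<forall>x. c (b - x) = c x"
    then obtain a where ra: "\<forall>x. c (a - x) = c x" by blast
    then show ?thesis using asym by blast
  qed
qed

lemma nbr:
  assumes per: "periodic1 c" and asym: "\<And>b. 6*b \<in> \<int> \<Longrightarrow> \<not>(\<forall>z. c (b - z) = c z)"
    and ra: "\<forall>z. c (a - z) = c z" and ha: "6*a \<notin> \<int>" and hw: "12 * w \<in> \<int>"
    and nd: "\<not> distinguishing (flip c w)"
  shows "\<exists>\<alpha>. (\<forall>z. flip c w (\<alpha> - z) = flip c w z) \<and> \<alpha> - 2*w \<notin> \<int> \<and> a - \<alpha> \<notin> \<int> \<and> c (\<alpha> - w) = neg (c w)"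
proof -
  have naw: "a - 2 * w \<notin> \<int>"
  proof
    assume "a - 2 * w \<in> \<int>"
    then have "6 * a \<in> \<int>" by (rule Zc2[OF _ hw, where i=6 and j=1 and k=0]) (simp add: algebra_simps)
    then show False using ha by blast
  qed
  from not_dist[OF nd] show ?thesis
  proof
    assume "\<exists>d. d \<notin> \<int> \<and> (\<forall>x. flip c w (x + d) = flip c w x)"
    then obtain d where "d \<notin> \<int>" "\<forall>x. flip c w (x + d) = flip c w x" by blast
    then have "a - 2 * w \<in> \<int>" using L_RT[OF per ra] by blast
    then show ?thesis using naw by blast
  next
    assume "\<exists>b. \<forall>x. flip c w (b - x) = flip c w x"
    then obtain \<alpha> where r: "\<forall>x. flip c w (\<alpha> - x) = flip c w x" by blast
    have n2: "\<alpha> - 2 * w \<notin> \<int>"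
    proof
      assume h: "\<alpha> - 2 * w \<in> \<int>"
      have "\<forall>z. c (\<alpha> - z) = c z" by (rule L_fix[OF r h])
      moreover have "6 * \<alpha> \<in> \<int>" by (rule Zc2[OF h hw, where i=6 and j=1 and k=0]) (simp add: algebra_simps)
      ultimately show False using asym by blast
    qed
    have m: "a - \<alpha> \<notin> \<int>"
    proof
      assume "a - \<alpha> \<in> \<int>"
      then have "a - 2 * w \<in> \<int>" by (rule L_same[OF per ra r])
      then show False using naw by blast
    qed
    have "c (\<alpha> - w) = neg (c w)" by (rule L_col[OF r n2])
    then show ?thesis using r n2 m by blast
  qed
qed



lemma colx: "periodic1 c \<Longrightarrow> c p = u \<Longrightarrow> c q = v \<Longrightarrow> u \<noteq> v \<Longrightarrow> p - q \<notin> \<int>"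
  using per_cong by blast

lemma swapZ: "(b - a \<in> \<int>) \<longleftrightarrow> (a - b \<in> \<int>)" for a b :: real
  using minus_Ints_iff[of "a - b"] by (simp add: algebra_simps)

lemma nZ: "p \<notin> \<int> \<Longrightarrow> (q::real) = of_int i * p + of_int k \<Longrightarrow> i = 1 \<or> i = -1 \<Longrightarrow> q \<notin> \<int>"
proof
  assume h: "p \<notin> \<int>" "q = of_int i * p + of_int k" "i = 1 \<or> i = -1" "q \<in> \<int>"
  have "p = of_int i * q + of_int (- i * k)" using h(2,3) by auto
  then have "p \<in> \<int>" using h(4) by (simp add: Ints_add Ints_mult)
  then show False using h(1) by blast
qed

lemma patA:
  fixes a a0 a1 a2 a3 :: real
  assumes per: "periodic1 c" and ra: "\<forall>z. c (a - z) = c z" and ha: "6 * a \<notin> \<int>"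
    and r0: "\<forall>z. flip c 0 (a0 - z) = flip c 0 z" and n0: "a0 - 2 * 0 \<notin> \<int>" and m0: "a - a0 \<notin> \<int>"
    and r1: "\<forall>z. flip c (1/6) (a1 - z) = flip c (1/6) z" and n1: "a1 - 2 * (1/6) \<notin> \<int>" and m1: "a - a1 \<notin> \<int>"
    and r2: "\<forall>z. flip c (1/3) (a2 - z) = flip c (1/3) z" and n2: "a2 - 2 * (1/3) \<notin> \<int>" and m2: "a - a2 \<notin> \<int>"
    and r3: "\<forall>z. flip c (1/2) (a3 - z) = flip c (1/2) z" and n3: "a3 - 2 * (1/2) \<notin> \<int>" and m3: "a - a3 \<notin> \<int>"
    and c1: "c (1/6) = c 0" and c3: "c (1/2) = c 0" and c2: "c (1/3) = neg (c 0)"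
  shows False
proof -
  have k0: "c (a0 - 0) = neg (c 0)" by (rule L_col[OF r0 n0])
  have k1: "c (a1 - 1/6) = neg (c 0)" using L_col[OF r1 n1] c1 by simp
  have k2: "c (a2 - 1/3) = c 0" using L_col[OF r2 n2] c2 by simp
  have k3: "c (a3 - 1/2) = neg (c 0)" using L_col[OF r3 n3] c3 by simp
  have ra0: "c (a - (a0 - 0)) = neg (c 0)" using ra k0 by metis
  have ra1: "c (a - (a1 - 1/6)) = neg (c 0)" using ra k1 by metis
  have ra3: "c (a - (a3 - 1/2)) = neg (c 0)" using ra k3 by metis
  have x01: "(0::real) - 1/6 \<notin> \<int>" "(1/6::real) - 0 \<notin> \<int>" "(1/6::real) - 1/2 \<notin> \<int>" "(1/2::real) - 1/6 \<notin> \<int>"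
    "(0::real) - 1/3 \<notin> \<int>" "(1/6::real) - 1/3 \<notin> \<int>" "(1/2::real) - 1/3 \<notin> \<int>"
    by (simp_all add: nis minus_Ints_iff)
  have m1': "a1 - a \<notin> \<int>" using m1 swapZ by blast
  have m3': "a3 - a \<notin> \<int>" using m3 swapZ by blast
  have m2': "a2 - a \<notin> \<int>" using m2 swapZ by blast
  have e01: "a1 - 0 - 1/6 \<notin> \<int>"
    using colx[OF per k1, of 0 "c 0"] by simp
  have e05: "a - a0 + 0 - 1/6 \<notin> \<int>"
    using colx[OF per ra0, of "1/6" "c 0"] c1 by (simp add: algebra_simps)
  have C01: "a0 + a1 - a - 2 * 0 \<in> \<int> \<or> a0 + a1 - a - 0 - 1/6 \<in> \<int>"
    using pathC[OF per ra r0 r1 x01(1) n0] e01 e05 m1 by blast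
  have e11: "a0 - 1/6 - 0 \<notin> \<int>"
    using colx[OF per k0, of "1/6" "c 0"] c1 by (simp add: algebra_simps)
  have e15: "a - a1 + 1/6 - 0 \<notin> \<int>"
    using colx[OF per ra1, of 0 "c 0"] by (simp add: algebra_simps)
  have C10: "a1 + a0 - a - 2 * (1/6) \<in> \<int> \<or> a1 + a0 - a - 1/6 - 0 \<in> \<int>"
    using pathC[OF per ra r1 r0 x01(2) n1] e11 e15 m0 by blast
  have E1: "a0 + a1 - a - 1/6 \<in> \<int>"
  proof -
    have "\<not> (a0 + a1 - a - 2 * 0 \<in> \<int> \<and> a1 + a0 - a - 2 * (1/6) \<in> \<int>)"
    proof
      assume h: "a0 + a1 - a - 2 * 0 \<in> \<int> \<and> a1 + a0 - a - 2 * (1/6) \<in> \<int>"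
      have "(1/3::real) \<in> \<int>" by (rule Zc2[OF conjunct1[OF h] conjunct2[OF h], where i=1 and j="-1" and k=0]) (simp add: algebra_simps)
      then show False using nis by blast
    qed
    then show ?thesis using C01 C10 by (auto simp: algebra_simps)
  qed
  have f11: "a3 - 1/6 - 1/2 \<notin> \<int>"
    using colx[OF per k3, of "1/6" "c 0"] c1 by (simp add: algebra_simps)
  have f15: "a - a1 + 1/6 - 1/2 \<notin> \<int>"
    using colx[OF per ra1, of "1/2" "c 0"] c3 by (simp add: algebra_simps)
  have C13: "a1 + a3 - a - 2 * (1/6) \<in> \<int> \<or> a1 + a3 - a - 1/6 - 1/2 \<in> \<int>"
    using pathC[OF per ra r1 r3 x01(3) n1] f11 f15 m3 by blast
  have g11: "a1 - 1/2 - 1/6 \<notin> \<int>"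
    using colx[OF per k1, of "1/2" "c 0"] c3 by (simp add: algebra_simps)
  have g15: "a - a3 + 1/2 - 1/6 \<notin> \<int>"
    using colx[OF per ra3, of "1/6" "c 0"] c1 by (simp add: algebra_simps)
  have C31: "a3 + a1 - a - 2 * (1/2) \<in> \<int> \<or> a3 + a1 - a - 1/2 - 1/6 \<in> \<int>"
    using pathC[OF per ra r3 r1 x01(4) n3] g11 g15 m1 by blast
  have E2: "a1 + a3 - a - 2/3 \<in> \<int>"
  proof -
    have "\<not> (a1 + a3 - a - 2 * (1/6) \<in> \<int> \<and> a3 + a1 - a - 2 * (1/2) \<in> \<int>)"
    proof
      assume h: "a1 + a3 - a - 2 * (1/6) \<in> \<int> \<and> a3 + a1 - a - 2 * (1/2) \<in> \<int>"
      have "(2/3::real) \<in> \<int>" by (rule Zc2[OF conjunct1[OF h] conjunct2[OF h], where i=1 and j="-1" and k=0]) (simp add: algebra_simps)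
      then show False using nis by blast
    qed
    moreover have "a1 + a3 - a - 1/6 - 1/2 \<in> \<int> \<Longrightarrow> ?thesis"
    proof - assume h: "a1 + a3 - a - 1/6 - 1/2 \<in> \<int>" show ?thesis by (rule Zc1[OF h, where i=1 and k=0]) (simp add: algebra_simps) qed
    moreover have "a3 + a1 - a - 1/2 - 1/6 \<in> \<int> \<Longrightarrow> ?thesis"
    proof - assume h: "a3 + a1 - a - 1/2 - 1/6 \<in> \<int>" show ?thesis by (rule Zc1[OF h, where i=1 and k=0]) (simp add: algebra_simps) qed
    ultimately show ?thesis using C13 C31 by blast
  qed
  have d1: "a - 0 - 1/6 \<notin> \<int>"
  proof
    assume h: "a - 0 - 1/6 \<in> \<int>"
    have "6 * a \<in> \<int>" by (rule Zc1[OF h, where i=6 and k=1]) (simp add: algebra_simps)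
    then show False using ha by blast
  qed
  have d2: "a1 - a + 0 - 1/6 \<notin> \<int>"
    using colx[OF per ra1, of 0 "c 0"] swapZ by (simp add: algebra_simps)
  have d4: "a0 - 0 - 1/6 \<notin> \<int>"
    using colx[OF per k0, of "1/6" "c 0"] c1 by (simp add: algebra_simps)
  have D01: "a0 - a1 + a - 2 * 0 \<in> \<int> \<or> a1 - a0 + 0 - 1/6 \<in> \<int>"
    using pathD[OF per ra r0 r1 x01(1) n0] d1 d2 d4 m1' by blast
  have h1: "a - 1/2 - 1/6 \<notin> \<int>"
  proof
    assume h: "a - 1/2 - 1/6 \<in> \<int>"
    have "6 * a \<in> \<int>" by (rule Zc1[OF h, where i=6 and k=4]) (simp add: algebra_simps)
    then show False using ha by blast
  qed
  have h2: "a1 - a + 1/2 - 1/6 \<notin> \<int>"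
    using colx[OF per ra1, of "1/2" "c 0"] c3 swapZ by (simp add: algebra_simps)
  have h4: "a3 - 1/2 - 1/6 \<notin> \<int>"
    using colx[OF per k3, of "1/6" "c 0"] c1 by (simp add: algebra_simps)
  have D31: "a3 - a1 + a - 2 * (1/2) \<in> \<int> \<or> a1 - a3 + 1/2 - 1/6 \<in> \<int>"
    using pathD[OF per ra r3 r1 x01(4) n3] h1 h2 h4 m1' by blast
  have E3: "a1 - a0 - 1/6 \<in> \<int>"
  proof (cases "a1 - a0 + 0 - 1/6 \<in> \<int>")
    case True then show ?thesis by simp
  next
    case False
    then have F: "a0 - a1 + a - 2 * 0 \<in> \<int>" using D01 by blast
    show ?thesis
    proof (cases "a3 - a1 + a - 2 * (1/2) \<in> \<int>")
      case True
      have "(1/2::real) \<in> \<int>" by (rule Zc4[OF E1 E2 F True, where i="-1" and j=1 and l=1 and m="-1" and k=0]) (simp add: algebra_simps)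
      then show ?thesis using nis by blast
    next
      case False
      then have H: "a1 - a3 + 1/2 - 1/6 \<in> \<int>" using D31 by blast
      have "6 * a \<in> \<int>" by (rule Zc4[OF E1 E2 F H, where i="-6" and j=6 and l=6 and m=6 and k=1]) (simp add: algebra_simps)
      then show ?thesis using ha by blast
    qed
  qed
  have E4: "a1 - a3 + 1/3 \<in> \<int>"
    by (rule Zc3[OF E1 E2 E3, where i=1 and j="-1" and l=1 and k=0]) (simp add: algebra_simps)
  have G0: "2 * a0 - a \<in> \<int>"
    by (rule Zc2[OF E1 E3, where i=1 and j="-1" and k=0]) (simp add: algebra_simps)
  have E5: "a3 - a0 - 1/2 \<in> \<int>"
    by (rule Zc2[OF E3 E4, where i=1 and j="-1" and k=0]) (simp add: algebra_simps)
  have col4: "\<And>x ax. c (ax - x) = neg (c 0) \<Longrightarrow> ax + a2 - a - x - 1/3 \<notin> \<int>"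
  proof -
    fix x ax assume hx: "c (ax - x) = neg (c 0)"
    have "c (a - (ax - x)) = neg (c 0)" using ra hx by metis
    then have "(a - (ax - x)) - (a2 - 1/3) \<notin> \<int>" using colx[OF per _ k2] by simp
    then show "ax + a2 - a - x - 1/3 \<notin> \<int>"
      using swapZ by (simp add: algebra_simps)
  qed
  have P0: "a2 - 0 - 1/3 \<in> \<int> \<or> a0 + a2 - a - 2 * 0 \<in> \<int>"
  proof -
    have o5: "a - a0 + 0 - 1/3 \<notin> \<int>"
    proof
      assume h: "a - a0 + 0 - 1/3 \<in> \<int>"
      have "6 * a \<in> \<int>" by (rule Zc2[OF h G0, where i=12 and j=6 and k=4]) (simp add: algebra_simps)
      then show False using ha by blast
    qed
    have o4: "a0 + a2 - a - 0 - 1/3 \<notin> \<int>" using col4[OF k0] .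
    show ?thesis using pathC[OF per ra r0 r2 x01(5) n0] o4 o5 m2 by blast
  qed
  have P1: "a2 - 1/6 - 1/3 \<in> \<int> \<or> a1 + a2 - a - 2 * (1/6) \<in> \<int>"
  proof -
    have o5: "a - a1 + 1/6 - 1/3 \<notin> \<int>"
    proof
      assume h: "a - a1 + 1/6 - 1/3 \<in> \<int>"
      have "6 * a \<in> \<int>" by (rule Zc3[OF h E3 G0, where i=12 and j=12 and l=6 and k=4]) (simp add: algebra_simps)
      then show False using ha by blast
    qed
    have o4: "a1 + a2 - a - 1/6 - 1/3 \<notin> \<int>" using col4[OF k1] .
    show ?thesis using pathC[OF per ra r1 r2 x01(6) n1] o4 o5 m2 by blast
  qed
  have P3: "a2 - 1/2 - 1/3 \<in> \<int> \<or> a3 + a2 - a - 2 * (1/2) \<in> \<int>"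
  proof -
    have o5: "a - a3 + 1/2 - 1/3 \<notin> \<int>"
    proof
      assume h: "a - a3 + 1/2 - 1/3 \<in> \<int>"
      have "6 * a \<in> \<int>" by (rule Zc3[OF h E5 G0, where i=12 and j=12 and l=6 and k=4]) (simp add: algebra_simps)
      then show False using ha by blast
    qed
    have o4: "a3 + a2 - a - 1/2 - 1/3 \<notin> \<int>" using col4[OF k3] .
    show ?thesis using pathC[OF per ra r3 r2 x01(7) n3] o4 o5 m2 by blast
  qed
  have q01: "\<not> (a2 - 0 - 1/3 \<in> \<int> \<and> a2 - 1/6 - 1/3 \<in> \<int>)"
  proof
    assume h: "a2 - 0 - 1/3 \<in> \<int> \<and> a2 - 1/6 - 1/3 \<in> \<int>"
    have "(1/6::real) \<in> \<int>" by (rule Zc2[OF conjunct1[OF h] conjunct2[OF h], where i=1 and j="-1" and k=0]) (simp add: algebra_simps)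
    then show False using nis by blast
  qed
  have q03: "\<not> (a2 - 0 - 1/3 \<in> \<int> \<and> a2 - 1/2 - 1/3 \<in> \<int>)"
  proof
    assume h: "a2 - 0 - 1/3 \<in> \<int> \<and> a2 - 1/2 - 1/3 \<in> \<int>"
    have "(1/2::real) \<in> \<int>" by (rule Zc2[OF conjunct1[OF h] conjunct2[OF h], where i=1 and j="-1" and k=0]) (simp add: algebra_simps)
    then show False using nis by blast
  qed
  have q13: "\<not> (a2 - 1/6 - 1/3 \<in> \<int> \<and> a2 - 1/2 - 1/3 \<in> \<int>)"
  proof
    assume h: "a2 - 1/6 - 1/3 \<in> \<int> \<and> a2 - 1/2 - 1/3 \<in> \<int>"
    have "(1/3::real) \<in> \<int>" by (rule Zc2[OF conjunct1[OF h] conjunct2[OF h], where i=1 and j="-1" and k=0]) (simp add: algebra_simps)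
    then show False using nis by blast
  qed
  have r01: "\<not> (a0 + a2 - a - 2 * 0 \<in> \<int> \<and> a1 + a2 - a - 2 * (1/6) \<in> \<int>)"
  proof
    assume h: "a0 + a2 - a - 2 * 0 \<in> \<int> \<and> a1 + a2 - a - 2 * (1/6) \<in> \<int>"
    have "(1/6::real) \<in> \<int>" by (rule Zc3[OF conjunct1[OF h] conjunct2[OF h] E3, where i=1 and j="-1" and l=1 and k=0]) (simp add: algebra_simps)
    then show False using nis by blast
  qed
  have r03: "\<not> (a0 + a2 - a - 2 * 0 \<in> \<int> \<and> a3 + a2 - a - 2 * (1/2) \<in> \<int>)"
  proof
    assume h: "a0 + a2 - a - 2 * 0 \<in> \<int> \<and> a3 + a2 - a - 2 * (1/2) \<in> \<int>"
    have "(1/2::real) \<in> \<int>" by (rule Zc3[OF conjunct1[OF h] conjunct2[OF h] E5, where i=1 and j="-1" and l=1 and k=0]) (simp add: algebra_simps)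
    then show False using nis by blast
  qed
  have r13: "\<not> (a1 + a2 - a - 2 * (1/6) \<in> \<int> \<and> a3 + a2 - a - 2 * (1/2) \<in> \<int>)"
  proof
    assume h: "a1 + a2 - a - 2 * (1/6) \<in> \<int> \<and> a3 + a2 - a - 2 * (1/2) \<in> \<int>"
    have "(1/3::real) \<in> \<int>" by (rule Zc3[OF conjunct1[OF h] conjunct2[OF h] E4, where i=1 and j="-1" and l="-1" and k=0]) (simp add: algebra_simps)
    then show False using nis by blast
  qed
  show False using P0 P1 P3 q01 q03 q13 r01 r03 r13 by blast
qed



lemma patB:
  fixes a a0 a1 a2 a3 :: real
  assumes per: "periodic1 c" and ra: "\<forall>z. c (a - z) = c z" and ha: "6 * a \<notin> \<int>"
    and r0: "\<forall>z. flip c 0 (a0 - z) = flip c 0 z" and n0: "a0 - 2 * 0 \<notin> \<int>" and m0: "a - a0 \<notin> \<int>"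
    and r1: "\<forall>z. flip c (1/6) (a1 - z) = flip c (1/6) z" and n1: "a1 - 2 * (1/6) \<notin> \<int>" and m1: "a - a1 \<notin> \<int>"
    and r2: "\<forall>z. flip c (1/3) (a2 - z) = flip c (1/3) z" and n2: "a2 - 2 * (1/3) \<notin> \<int>" and m2: "a - a2 \<notin> \<int>"
    and r3: "\<forall>z. flip c (1/2) (a3 - z) = flip c (1/2) z" and n3: "a3 - 2 * (1/2) \<notin> \<int>" and m3: "a - a3 \<notin> \<int>"
    and c2: "c (1/3) = c 0" and c1: "c (1/6) = neg (c 0)" and c3: "c (1/2) = neg (c 0)"
  shows False
proof -
  have k0: "c (a0 - 0) = neg (c 0)" by (rule L_col[OF r0 n0])
  have k1: "c (a1 - 1/6) = c 0" using L_col[OF r1 n1] c1 by simp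
  have k2: "c (a2 - 1/3) = neg (c 0)" using L_col[OF r2 n2] c2 by simp
  have k3: "c (a3 - 1/2) = c 0" using L_col[OF r3 n3] c3 by simp
  have ra0: "c (a - (a0 - 0)) = neg (c 0)" using ra k0 by metis
  have ra1: "c (a - (a1 - 1/6)) = c 0" using ra k1 by metis
  have ra2: "c (a - (a2 - 1/3)) = neg (c 0)" using ra k2 by metis
  have ra3: "c (a - (a3 - 1/2)) = c 0" using ra k3 by metis
  have x01: "(0::real) - 1/6 \<notin> \<int>" "(1/6::real) - 1/2 \<notin> \<int>" "(1/2::real) - 1/6 \<notin> \<int>"
    "(0::real) - 1/3 \<notin> \<int>" "(1/3::real) - 0 \<notin> \<int>"
    by (simp_all add: nis minus_Ints_iff)
  have m0': "a0 - a \<notin> \<int>" using m0 swapZ by blast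
  have m1': "a1 - a \<notin> \<int>" using m1 swapZ by blast
  have m3': "a3 - a \<notin> \<int>" using m3 swapZ by blast
  have m2': "a2 - a \<notin> \<int>" using m2 swapZ by blast
  have six: "\<And>t. 6 * a \<in> \<int> \<Longrightarrow> t" using ha by blast
  have C02: "a0 + a2 - a - 2 * 0 \<in> \<int> \<or> a0 + a2 - a - 0 - 1/3 \<in> \<int>"
  proof -
    have o1: "a2 - 0 - 1/3 \<notin> \<int>" using colx[OF per k2, of 0 "c 0"] by (simp add: algebra_simps)
    have o5: "a - a0 + 0 - 1/3 \<notin> \<int>" using colx[OF per ra0, of "1/3" "c 0"] c2 by (simp add: algebra_simps)
    show ?thesis using pathC[OF per ra r0 r2 x01(4) n0] o1 o5 m2 by blast
  qed
  have C20: "a2 + a0 - a - 2 * (1/3) \<in> \<int> \<or> a2 + a0 - a - 1/3 - 0 \<in> \<int>"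
  proof -
    have o1: "a0 - 1/3 - 0 \<notin> \<int>" using colx[OF per k0, of "1/3" "c 0"] c2 by (simp add: algebra_simps)
    have o5: "a - a2 + 1/3 - 0 \<notin> \<int>" using colx[OF per ra2, of 0 "c 0"] by (simp add: algebra_simps)
    show ?thesis using pathC[OF per ra r2 r0 x01(5) n2] o1 o5 m0 by blast
  qed
  have F1: "a0 + a2 - a - 1/3 \<in> \<int>"
  proof -
    have "\<not> (a0 + a2 - a - 2 * 0 \<in> \<int> \<and> a2 + a0 - a - 2 * (1/3) \<in> \<int>)"
    proof
      assume h: "a0 + a2 - a - 2 * 0 \<in> \<int> \<and> a2 + a0 - a - 2 * (1/3) \<in> \<int>"
      have "(2/3::real) \<in> \<int>" by (rule Zc2[OF conjunct1[OF h] conjunct2[OF h], where i=1 and j="-1" and k=0]) (simp add: algebra_simps)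
      then show False using nis by blast
    qed
    moreover have "a0 + a2 - a - 0 - 1/3 \<in> \<int> \<Longrightarrow> ?thesis"
    proof - assume h: "a0 + a2 - a - 0 - 1/3 \<in> \<int>" show ?thesis by (rule Zc1[OF h, where i=1 and k=0]) (simp add: algebra_simps) qed
    moreover have "a2 + a0 - a - 1/3 - 0 \<in> \<int> \<Longrightarrow> ?thesis"
    proof - assume h: "a2 + a0 - a - 1/3 - 0 \<in> \<int>" show ?thesis by (rule Zc1[OF h, where i=1 and k=0]) (simp add: algebra_simps) qed
    ultimately show ?thesis using C02 C20 by blast
  qed
  have C13: "a1 + a3 - a - 2 * (1/6) \<in> \<int> \<or> a1 + a3 - a - 1/6 - 1/2 \<in> \<int>"
  proof -
    have o1: "a3 - 1/6 - 1/2 \<notin> \<int>" using colx[OF per k3, of "1/6" "neg (c 0)"] c1 by (simp add: algebra_simps)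
    have o5: "a - a1 + 1/6 - 1/2 \<notin> \<int>" using colx[OF per ra1, of "1/2" "neg (c 0)"] c3 by (simp add: algebra_simps)
    show ?thesis using pathC[OF per ra r1 r3 x01(2) n1] o1 o5 m3 by blast
  qed
  have C31: "a3 + a1 - a - 2 * (1/2) \<in> \<int> \<or> a3 + a1 - a - 1/2 - 1/6 \<in> \<int>"
  proof -
    have o1: "a1 - 1/2 - 1/6 \<notin> \<int>" using colx[OF per k1, of "1/2" "neg (c 0)"] c3 by (simp add: algebra_simps)
    have o5: "a - a3 + 1/2 - 1/6 \<notin> \<int>" using colx[OF per ra3, of "1/6" "neg (c 0)"] c1 by (simp add: algebra_simps)
    show ?thesis using pathC[OF per ra r3 r1 x01(3) n3] o1 o5 m1 by blast
  qed
  have F2: "a1 + a3 - a - 2/3 \<in> \<int>"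
  proof -
    have "\<not> (a1 + a3 - a - 2 * (1/6) \<in> \<int> \<and> a3 + a1 - a - 2 * (1/2) \<in> \<int>)"
    proof
      assume h: "a1 + a3 - a - 2 * (1/6) \<in> \<int> \<and> a3 + a1 - a - 2 * (1/2) \<in> \<int>"
      have "(2/3::real) \<in> \<int>" by (rule Zc2[OF conjunct1[OF h] conjunct2[OF h], where i=1 and j="-1" and k=0]) (simp add: algebra_simps)
      then show False using nis by blast
    qed
    moreover have "a1 + a3 - a - 1/6 - 1/2 \<in> \<int> \<Longrightarrow> ?thesis"
    proof - assume h: "a1 + a3 - a - 1/6 - 1/2 \<in> \<int>" show ?thesis by (rule Zc1[OF h, where i=1 and k=0]) (simp add: algebra_simps) qed
    moreover have "a3 + a1 - a - 1/2 - 1/6 \<in> \<int> \<Longrightarrow> ?thesis"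
    proof - assume h: "a3 + a1 - a - 1/2 - 1/6 \<in> \<int>" show ?thesis by (rule Zc1[OF h, where i=1 and k=0]) (simp add: algebra_simps) qed
    ultimately show ?thesis using C13 C31 by blast
  qed
  have D02: "a0 - a2 + a - 2 * 0 \<in> \<int> \<or> a2 - a0 + 0 - 1/3 \<in> \<int>"
  proof -
    have d1: "a - 0 - 1/3 \<notin> \<int>"
    proof
      assume h: "a - 0 - 1/3 \<in> \<int>"
      show False by (rule six, rule Zc1[OF h, where i=6 and k=2]) (simp add: algebra_simps)
    qed
    have d2: "a2 - a + 0 - 1/3 \<notin> \<int>" using colx[OF per ra2, of 0 "c 0"] swapZ by (simp add: algebra_simps)
    have d4: "a0 - 0 - 1/3 \<notin> \<int>" using colx[OF per k0, of "1/3" "c 0"] c2 by (simp add: algebra_simps)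
    show ?thesis using pathD[OF per ra r0 r2 x01(4) n0] d1 d2 d4 m2' by blast
  qed
  have D20: "a2 - a0 + a - 2 * (1/3) \<in> \<int> \<or> a0 - a2 + 1/3 - 0 \<in> \<int>"
  proof -
    have d1: "a - 1/3 - 0 \<notin> \<int>"
    proof
      assume h: "a - 1/3 - 0 \<in> \<int>"
      show False by (rule six, rule Zc1[OF h, where i=6 and k=2]) (simp add: algebra_simps)
    qed
    have d2: "a0 - a + 1/3 - 0 \<notin> \<int>" using colx[OF per ra0, of "1/3" "c 0"] c2 swapZ by (simp add: algebra_simps)
    have d4: "a2 - 1/3 - 0 \<notin> \<int>" using colx[OF per k2, of 0 "c 0"] by (simp add: algebra_simps)
    show ?thesis using pathD[OF per ra r2 r0 x01(5) n2] d1 d2 d4 m0' by blast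
  qed
  have F3: "a2 - a0 - 1/3 \<in> \<int>"
  proof (cases "a2 - a0 + 0 - 1/3 \<in> \<int>")
    case True then show ?thesis by simp
  next
    case False
    then have F: "a0 - a2 + a - 2 * 0 \<in> \<int>" using D02 by blast
    show ?thesis
    proof (cases "a2 - a0 + a - 2 * (1/3) \<in> \<int>")
      case True
      show ?thesis by (rule six, rule Zc2[OF F True, where i=3 and j=3 and k=2]) (simp add: algebra_simps)
    next
      case False
      then have H: "a0 - a2 + 1/3 - 0 \<in> \<int>" using D20 by blast
      show ?thesis by (rule Zc1[OF H, where i="-1" and k=0]) (simp add: algebra_simps)
    qed
  qed
  have G1: "2 * a0 - a \<in> \<int>"
    by (rule Zc2[OF F1 F3, where i=1 and j="-1" and k=0]) (simp add: algebra_simps)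
  have D13: "a1 - a3 + a - 2 * (1/6) \<in> \<int> \<or> a3 - a1 + 1/6 - 1/2 \<in> \<int>"
  proof -
    have d1: "a - 1/6 - 1/2 \<notin> \<int>"
    proof
      assume h: "a - 1/6 - 1/2 \<in> \<int>"
      show False by (rule six, rule Zc1[OF h, where i=6 and k=4]) (simp add: algebra_simps)
    qed
    have d2: "a3 - a + 1/6 - 1/2 \<notin> \<int>" using colx[OF per ra3, of "1/6" "neg (c 0)"] c1 swapZ by (simp add: algebra_simps)
    have d4: "a1 - 1/6 - 1/2 \<notin> \<int>" using colx[OF per k1, of "1/2" "neg (c 0)"] c3 by (simp add: algebra_simps)
    show ?thesis using pathD[OF per ra r1 r3 x01(2) n1] d1 d2 d4 m3' by blast
  qed
  have D31: "a3 - a1 + a - 2 * (1/2) \<in> \<int> \<or> a1 - a3 + 1/2 - 1/6 \<in> \<int>"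
  proof -
    have d1: "a - 1/2 - 1/6 \<notin> \<int>"
    proof
      assume h: "a - 1/2 - 1/6 \<in> \<int>"
      show False by (rule six, rule Zc1[OF h, where i=6 and k=4]) (simp add: algebra_simps)
    qed
    have d2: "a1 - a + 1/2 - 1/6 \<notin> \<int>" using colx[OF per ra1, of "1/2" "neg (c 0)"] c3 swapZ by (simp add: algebra_simps)
    have d4: "a3 - 1/2 - 1/6 \<notin> \<int>" using colx[OF per k3, of "1/6" "neg (c 0)"] c1 by (simp add: algebra_simps)
    show ?thesis using pathD[OF per ra r3 r1 x01(3) n3] d1 d2 d4 m1' by blast
  qed
  have F4: "a3 - a1 - 1/3 \<in> \<int>"
  proof (cases "a3 - a1 + 1/6 - 1/2 \<in> \<int>")
    case True show ?thesis by (rule Zc1[OF True, where i=1 and k=0]) (simp add: algebra_simps)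
  next
    case False
    then have F: "a1 - a3 + a - 2 * (1/6) \<in> \<int>" using D13 by blast
    show ?thesis
    proof (cases "a3 - a1 + a - 2 * (1/2) \<in> \<int>")
      case True
      show ?thesis by (rule six, rule Zc2[OF F True, where i=3 and j=3 and k=4]) (simp add: algebra_simps)
    next
      case False
      then have H: "a1 - a3 + 1/2 - 1/6 \<in> \<int>" using D31 by blast
      show ?thesis by (rule Zc1[OF H, where i="-1" and k=0]) (simp add: algebra_simps)
    qed
  qed
  have G2: "2 * a1 - a - 1/3 \<in> \<int>"
    by (rule Zc2[OF F2 F4, where i=1 and j="-1" and k=0]) (simp add: algebra_simps)
  have o1: "a1 - 0 - 1/6 \<notin> \<int>"
  proof
    assume h: "a1 - 0 - 1/6 \<in> \<int>"
    show False by (rule six, rule Zc2[OF h G2, where i=12 and j="-6" and k=0]) (simp add: algebra_simps)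
  qed
  have o3: "a0 + a1 - a - 2 * 0 \<notin> \<int>"
  proof
    assume h: "a0 + a1 - a - 2 * 0 \<in> \<int>"
    have "(1/3::real) \<in> \<int>" by (rule Zc3[OF h G1 G2, where i=2 and j="-1" and l="-1" and k=0]) (simp add: algebra_simps)
    then show False using nis by blast
  qed
  have o4: "a0 + a1 - a - 0 - 1/6 \<notin> \<int>"
    using colx[OF per ra0 k1] swapZ by (simp add: algebra_simps)
  have o5: "a - a0 + 0 - 1/6 \<notin> \<int>"
  proof
    assume h: "a - a0 + 0 - 1/6 \<in> \<int>"
    show False by (rule six, rule Zc2[OF h G1, where i=12 and j=6 and k=2]) (simp add: algebra_simps)
  qed
  show False using pathC[OF per ra r0 r1 x01(1) n0] o1 o3 o4 o5 m1 by blast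
qed



lemma asym_gen:
  assumes per: "periodic1 c" and hb: "6 * b \<in> \<int>" and r: "\<forall>z. c (b - z) = c z"
  shows "\<exists>k\<in>{0,1,2,3,4,5::int}. \<forall>z. c (of_int k / 6 - z) = c z"
proof -
  obtain m where m: "6 * b = of_int m" using hb by (auto elim: Ints_cases)
  define k where "k = m mod 6"
  define q where "q = m div 6"
  have mk: "m = 6 * q + k" by (simp add: k_def q_def)
  have k6: "k \<in> {0,1,2,3,4,5}" unfolding k_def by auto
  have bq: "b - of_int k / 6 = of_int q"
  proof -
    have "6 * b = 6 * of_int q + of_int k" using m mk by simp
    then show ?thesis by (simp add: field_simps)
  qed
  have "\<forall>z. c (of_int k / 6 - z) = c z"
  proof
    fix z
    have "c (of_int k / 6 - z) = c (b - z)"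
      by (rule per_cong[OF per]) (use bq in \<open>simp add: algebra_simps minus_Ints_iff\<close>)
    then show "c (of_int k / 6 - z) = c z" using r by simp
  qed
  then show ?thesis using k6 by blast
qed

lemma asymA:
  assumes per: "periodic1 c" and v: "c 0 = X" "c (1/6) = X" "c (1/3) = neg X" "c (1/2) = X" "c (2/3) = neg X" "c (5/6) = neg X"
  shows "6 * b \<in> \<int> \<Longrightarrow> \<not> (\<forall>z. c (b - z) = c z)"
proof
  assume hb: "6 * b \<in> \<int>" and r: "\<forall>z. c (b - z) = c z"
  obtain k where k: "k \<in> {0,1,2,3,4,5::int}" and hk: "\<forall>z. c (of_int k / 6 - z) = c z"
    using asym_gen[OF per hb r] by blast
  have pc: "\<And>x y. x - y \<in> \<int> \<Longrightarrow> c x = c y" using per_cong[OF per] by blast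
  from k show False
  proof (elim insertE emptyE)
    assume "k = 0"
    then have "c (0 - 1/6) = c (1/6)" using hk[rule_format, of "1/6"] by simp
    moreover have "c (0 - 1/6) = c (5/6)" by (rule pc) simp
    ultimately show False using v by simp
  next
    assume "k = 1"
    then have "c (1/6 - 1/2) = c (1/2)" using hk[rule_format, of "1/2"] by simp
    moreover have "c (1/6 - 1/2) = c (2/3)" by (rule pc) simp
    ultimately show False using v by simp
  next
    assume "k = 2"
    then have "c (1/3 - 0) = c (0)" using hk[rule_format, of "0"] by simp
    then show False using v by simp
  next
    assume "k = 3"
    then have "c (1/2 - 1/6) = c (1/6)" using hk[rule_format, of "1/6"] by simp
    then show False using v by simp
  next
    assume "k = 4"
    then have "c (2/3 - 0) = c (0)" using hk[rule_format, of "0"] by simp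
    then show False using v by simp
  next
    assume "k = 5"
    then have "c (5/6 - 0) = c (0)" using hk[rule_format, of "0"] by simp
    then show False using v by simp
  qed
qed

lemma asymB:
  assumes per: "periodic1 c" and v: "c 0 = X" "c (1/6) = neg X" "c (1/3) = X" "c (1/2) = neg X" "c (2/3) = neg X" "c (5/6) = X"
  shows "6 * b \<in> \<int> \<Longrightarrow> \<not> (\<forall>z. c (b - z) = c z)"
proof
  assume hb: "6 * b \<in> \<int>" and r: "\<forall>z. c (b - z) = c z"
  obtain k where k: "k \<in> {0,1,2,3,4,5::int}" and hk: "\<forall>z. c (of_int k / 6 - z) = c z"
    using asym_gen[OF per hb r] by blast
  have pc: "\<And>x y. x - y \<in> \<int> \<Longrightarrow> c x = c y" using per_cong[OF per] by blast
  from k show False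
  proof (elim insertE emptyE)
    assume "k = 0"
    then have "c (0 - 1/6) = c (1/6)" using hk[rule_format, of "1/6"] by simp
    moreover have "c (0 - 1/6) = c (5/6)" by (rule pc) simp
    ultimately show False using v by simp
  next
    assume "k = 1"
    then have "c (1/6 - 0) = c (0)" using hk[rule_format, of "0"] by simp
    then show False using v by simp
  next
    assume "k = 2"
    then have "c (1/3 - 1/2) = c (1/2)" using hk[rule_format, of "1/2"] by simp
    moreover have "c (1/3 - 1/2) = c (5/6)" by (rule pc) simp
    ultimately show False using v by simp
  next
    assume "k = 3"
    then have "c (1/2 - 0) = c (0)" using hk[rule_format, of "0"] by simp
    then show False using v by simp
  next
    assume "k = 4"
    then have "c (2/3 - 0) = c (0)" using hk[rule_format, of "0"] by simp
    then show False using v by simp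
  next
    assume "k = 5"
    then have "c (5/6 - 1/3) = c (1/3)" using hk[rule_format, of "1/3"] by simp
    then show False using v by simp
  qed
qed

lemma key:
  assumes per: "periodic1 c" and asym: "\<And>b. 6*b \<in> \<int> \<Longrightarrow> \<not>(\<forall>z. c (b - z) = c z)"
    and pat: "(c (1/6) = c 0 \<and> c (1/2) = c 0 \<and> c (1/3) = neg (c 0)) \<or>
              (c (1/3) = c 0 \<and> c (1/6) = neg (c 0) \<and> c (1/2) = neg (c 0))"
  shows "distinguishing c \<or> distinguishing (flip c 0) \<or> distinguishing (flip c (1/6)) \<or>
         distinguishing (flip c (1/3)) \<or> distinguishing (flip c (1/2))"
proof (rule ccontr)
  assume "\<not> ?thesis"
  then have nd: "\<not> distinguishing c" "\<not> distinguishing (flip c 0)" "\<not> distinguishing (flip c (1/6))"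
    "\<not> distinguishing (flip c (1/3))" "\<not> distinguishing (flip c (1/2))" by auto
  obtain a where ra: "\<forall>z. c (a - z) = c z" and ha: "6 * a \<notin> \<int>"
    using refl_of[OF per asym nd(1) nd(2)] by blast
  obtain a0 where A0: "\<forall>z. flip c 0 (a0 - z) = flip c 0 z" "a0 - 2 * 0 \<notin> \<int>" "a - a0 \<notin> \<int>"
    using nbr[OF per asym ra ha _ nd(2)] by force
  obtain a1 where A1: "\<forall>z. flip c (1/6) (a1 - z) = flip c (1/6) z" "a1 - 2 * (1/6) \<notin> \<int>" "a - a1 \<notin> \<int>"
    using nbr[OF per asym ra ha _ nd(3)] by force
  obtain a2 where A2: "\<forall>z. flip c (1/3) (a2 - z) = flip c (1/3) z" "a2 - 2 * (1/3) \<notin> \<int>" "a - a2 \<notin> \<int>"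
    using nbr[OF per asym ra ha _ nd(4)] by force
  obtain a3 where A3: "\<forall>z. flip c (1/2) (a3 - z) = flip c (1/2) z" "a3 - 2 * (1/2) \<notin> \<int>" "a - a3 \<notin> \<int>"
    using nbr[OF per asym ra ha _ nd(5)] by force
  from pat show False
  proof
    assume "c (1/6) = c 0 \<and> c (1/2) = c 0 \<and> c (1/3) = neg (c 0)"
    then show False using patA[OF per ra ha A0 A1 A2 A3] by blast
  next
    assume "c (1/3) = c 0 \<and> c (1/6) = neg (c 0) \<and> c (1/2) = neg (c 0)"
    then show False using patB[OF per ra ha A0 A1 A2 A3] by blast
  qed
qed

definition ext4 :: "color \<Rightarrow> color \<Rightarrow> color \<Rightarrow> color \<Rightarrow> (real \<Rightarrow> color) \<Rightarrow> real \<Rightarrow> color" where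
  "ext4 u0 u1 u2 u3 p x = (if x \<in> \<int> then u0 else if x - 1/6 \<in> \<int> then u1 else
     if x - 1/3 \<in> \<int> then u2 else if x - 1/2 \<in> \<int> then u3 else p x)"

lemma shift1: "((x::real) + 1 - t \<in> \<int>) \<longleftrightarrow> (x - t \<in> \<int>)"
proof -
  have e: "x + 1 - t = (x - t) + 1" by simp
  show ?thesis unfolding e by (rule Ints_add1_iff)
qed

lemma ext4_per: assumes "periodic1 p" shows "periodic1 (ext4 u0 u1 u2 u3 p)"
  unfolding periodic1_def
proof
  fix x :: real
  have p1: "p (x + 1) = p x" using assms unfolding periodic1_def by blast
  have i0: "(x + 1 \<in> \<int>) = (x \<in> \<int>)" using Ints_add1_iff by simp
  show "ext4 u0 u1 u2 u3 p (x + 1) = ext4 u0 u1 u2 u3 p x"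
    unfolding ext4_def i0 shift1 p1 by simp
qed

lemma ext4_vals:
  "ext4 u0 u1 u2 u3 p 0 = u0" "ext4 u0 u1 u2 u3 p (1/6) = u1" "ext4 u0 u1 u2 u3 p (1/3) = u2"
  "ext4 u0 u1 u2 u3 p (1/2) = u3" "ext4 u0 u1 u2 u3 p (2/3) = p (2/3)" "ext4 u0 u1 u2 u3 p (5/6) = p (5/6)"
  by (simp_all add: ext4_def nis)

lemma notin_W:
  assumes "\<not> in_circle_set x {0, 1/6, 1/3, 1/2}"
  shows "x \<notin> \<int>" "x - 1/6 \<notin> \<int>" "x - 1/3 \<notin> \<int>" "x - 1/2 \<notin> \<int>"
  using assms unfolding in_circle_set_def by auto

lemma ext4_agree:
  assumes "\<not> in_circle_set x {0, 1/6, 1/3, 1/2}"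
  shows "ext4 u0 u1 u2 u3 p x = p x"
  using notin_W[OF assms] by (simp add: ext4_def)

lemma flip_agree:
  assumes "\<not> in_circle_set x {0, 1/6, 1/3, 1/2}"
  shows "flip c 0 x = c x" "flip c (1/6) x = c x" "flip c (1/3) x = c x" "flip c (1/2) x = c x"
  using notin_W[OF assms] by (simp_all add: flip_out)

theorem lemma2p3p10:
  shows "P {0, 1/6, 1/3, 1/2}"
  unfolding P_def
proof (intro allI impI)
  fix p :: "real \<Rightarrow> color"
  assume pp: "periodic1 p"
  define q1 where "q1 = p (2/3)"
  define q2 where "q2 = p (5/6)"
  define W :: "real set" where "W = {0, 1/6, 1/3, 1/2}"
  obtain c where per: "periodic1 c" and agree: "\<forall>x. \<not> in_circle_set x W \<longrightarrow> c x = p x"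
    and asym: "\<And>b. 6*b \<in> \<int> \<Longrightarrow> \<not>(\<forall>z. c (b - z) = c z)"
    and pat: "(c (1/6) = c 0 \<and> c (1/2) = c 0 \<and> c (1/3) = neg (c 0)) \<or>
              (c (1/3) = c 0 \<and> c (1/6) = neg (c 0) \<and> c (1/2) = neg (c 0))"
  proof (cases "q1 = q2")
    case True
    let ?c = "ext4 (neg q1) (neg q1) q1 (neg q1) p"
    have per: "periodic1 ?c" by (rule ext4_per[OF pp])
    have ag: "\<forall>x. \<not> in_circle_set x W \<longrightarrow> ?c x = p x" using ext4_agree unfolding W_def by blast
    have v: "?c 0 = neg q1" "?c (1/6) = neg q1" "?c (1/3) = neg (neg q1)" "?c (1/2) = neg q1"
      "?c (2/3) = neg (neg q1)" "?c (5/6) = neg (neg q1)"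
      using True by (simp_all add: ext4_vals q1_def q2_def)
    have pa: "(?c (1/6) = ?c 0 \<and> ?c (1/2) = ?c 0 \<and> ?c (1/3) = neg (?c 0)) \<or>
              (?c (1/3) = ?c 0 \<and> ?c (1/6) = neg (?c 0) \<and> ?c (1/2) = neg (?c 0))" using v by simp
    show ?thesis by (rule that[OF per ag asymA[OF per v] pa])
  next
    case False
    let ?c = "ext4 q2 q1 q2 q1 p"
    have q: "q1 = neg q2" using False neg_eq_iff by metis
    have per: "periodic1 ?c" by (rule ext4_per[OF pp])
    have ag: "\<forall>x. \<not> in_circle_set x W \<longrightarrow> ?c x = p x" using ext4_agree unfolding W_def by blast
    have v: "?c 0 = q2" "?c (1/6) = neg q2" "?c (1/3) = q2" "?c (1/2) = neg q2"
      "?c (2/3) = neg q2" "?c (5/6) = q2"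
      using q by (simp_all add: ext4_vals q1_def q2_def)
    have pa: "(?c (1/6) = ?c 0 \<and> ?c (1/2) = ?c 0 \<and> ?c (1/3) = neg (?c 0)) \<or>
              (?c (1/3) = ?c 0 \<and> ?c (1/6) = neg (?c 0) \<and> ?c (1/2) = neg (?c 0))" using v by simp
    show ?thesis by (rule that[OF per ag asymB[OF per v] pa])
  qed
  have fp: "\<And>w. periodic1 (flip c w)" by (rule flip_per[OF per])
  have ag: "\<forall>x. \<not> in_circle_set x {0, 1/6, 1/3, 1/2} \<longrightarrow> c x = p x" using agree unfolding W_def .
  have f0: "\<forall>x. \<not> in_circle_set x {0, 1/6, 1/3, 1/2} \<longrightarrow> flip c 0 x = p x" using ag flip_agree by metis
  have f1: "\<forall>x. \<not> in_circle_set x {0, 1/6, 1/3, 1/2} \<longrightarrow> flip c (1/6) x = p x" using ag flip_agree by metis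
  have f2: "\<forall>x. \<not> in_circle_set x {0, 1/6, 1/3, 1/2} \<longrightarrow> flip c (1/3) x = p x" using ag flip_agree by metis
  have f3: "\<forall>x. \<not> in_circle_set x {0, 1/6, 1/3, 1/2} \<longrightarrow> flip c (1/2) x = p x" using ag flip_agree by metis
  from key[OF per asym pat]
  show "\<exists>c. periodic1 c \<and> (\<forall>x. \<not> in_circle_set x {0, 1/6, 1/3, 1/2} \<longrightarrow> c x = p x) \<and> distinguishing c"
    using per ag fp f0 f1 f2 f3 by blast
qed


end
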